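(* Fix a partition $\Pi$ of $V(G)$ into sets of sizes divisible by $r$. Suppose each $f_v$ is $K_v$-Lipschitz and let $K_{\max}=\max_vK_v$. If $\mathcal P$ is sampled uniformly from the set of partitions of $V(G)$ into $n$ sets of size $r$ each contained in a single part of $\Pi$, and $T=T_{\vec B,\mathcal P}$ with $\vec B$ independent of $\mathcal P$, then $$\mathbb E_{\mathcal P}\Big[\big(\mathbb E_{\vec B}(\xi\mid\mathcal P)\big)^2\Big]\le\frac{2K_{\max}^2|\Pi|}{nr\,d_{\min}}.$$
   Context: Let $n,p,q$ be positive integers, $r=p+q$, $G$ a finite simple graph with $|V(G)|=rn$ and no isolated vertices; $\mathcal N(v)$, $d(v)$, $d_{\min}$ neighbor set, degree, minimum degree. For each $v$, $f_v:2^{\mathcal N(v)}\to\mathbb R$ with $f_v(\emptyset)=0$. $\sigma_T(v)=q$ if $v\in T$, $-p$ otherwise; for $|T|=pn$, $\xi=\frac1{pqn}\sum_v\sigma_T(v)f_v(T\cap\mathcal N(v))$. $f_v$ is $K_v$-Lipschitz ($K_v>0$) if $|f_v(A)-f_v(A')|\le K_v|A\triangle A'|/d(v)$ for all $A,A'\subseteq\mathcal N(v)$. Restricted randomization: for $\mathcal P=(S_1,\dots,S_n)$, $S_i=\{w_i^1,\dots,w_i^r\}$, $B_i$ i.i.d. uniform $p$-subsets of $\{1,\dots,r\}$, $T_{\vec B,\mathcal P}=\{w_i^j:j\in B_i\}$. *)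

theory Defs
  imports "HOL-Probability.Probability" "HOL-Library.Disjoint_Sets"
begin

definition simple_graph :: "'a set \<Rightarrow> ('a \<Rightarrow> 'a \<Rightarrow> bool) \<Rightarrow> bool" where
  "simple_graph V E \<longleftrightarrow> finite V \<and> (\<forall>u v. E u v \<longrightarrow> u \<in> V \<and> v \<in> V)
     \<and> (\<forall>u v. E u v \<longrightarrow> E v u) \<and> (\<forall>v. \<not> E v v)"

definition nbhd :: "('a \<Rightarrow> 'a \<Rightarrow> bool) \<Rightarrow> 'a \<Rightarrow> 'a set" where
  "nbhd E v = {u. E v u}"

definition deg :: "('a \<Rightarrow> 'a \<Rightarrow> bool) \<Rightarrow> 'a \<Rightarrow> nat" where
  "deg E v = card (nbhd E v)"

definition min_deg :: "'a set \<Rightarrow> ('a \<Rightarrow> 'a \<Rightarrow> bool) \<Rightarrow> nat" where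
  "min_deg V E = Min (deg E ` V)"

definition lipschitz_fv :: "('a \<Rightarrow> 'a \<Rightarrow> bool) \<Rightarrow> ('a set \<Rightarrow> real) \<Rightarrow> real \<Rightarrow> 'a \<Rightarrow> bool" where
  "lipschitz_fv E g K v \<longleftrightarrow> K > 0 \<and>
     (\<forall>A A'. A \<subseteq> nbhd E v \<longrightarrow> A' \<subseteq> nbhd E v \<longrightarrow>
        \<bar>g A - g A'\<bar> \<le> K * real (card (A - A' \<union> (A' - A))) / real (deg E v))"

definition sigma :: "nat \<Rightarrow> nat \<Rightarrow> 'a set \<Rightarrow> 'a \<Rightarrow> real" where
  "sigma p q T v = (if v \<in> T then real q else - real p)"

definition xi :: "'a set \<Rightarrow> ('a \<Rightarrow> 'a \<Rightarrow> bool) \<Rightarrow> ('a \<Rightarrow> 'a set \<Rightarrow> real) \<Rightarrow> nat \<Rightarrow> nat \<Rightarrow> nat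
                  \<Rightarrow> 'a set \<Rightarrow> real" where
  "xi V E f p q n T = (1 / (real p * real q * real n)) *
     (\<Sum>v\<in>V. sigma p q T v * f v (T \<inter> nbhd E v))"

definition restricted_partitions :: "'a set \<Rightarrow> nat \<Rightarrow> 'a set set \<Rightarrow> 'a set set set" where
  "restricted_partitions V r Parts =
     {P. partition_on V P \<and> (\<forall>S\<in>P. card S = r \<and> (\<exists>X\<in>Parts. S \<subseteq> X))}"

text \<open>Possible values of T_{B,P}: T contains exactly p elements of each block
  (each choice of (B_i) gives a distinct such T, so uniform B gives uniform T).\<close>
definition restricted_T :: "'a set \<Rightarrow> nat \<Rightarrow> 'a set set \<Rightarrow> 'a set set" where
  "restricted_T V p P = {T. T \<subseteq> V \<and> (\<forall>S\<in>P. card (T \<inter> S) = p)}"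

end

theory Submission
  imports Defs
begin

lemma sum_over_partition:
  assumes "partition_on A P" "finite A"
  shows "(\<Sum>v\<in>A. h v) = (\<Sum>S\<in>P. \<Sum>v\<in>S. h v)"
proof -
  have "A = \<Union>P" using assms(1) by (simp add: partition_onD1)
  moreover have "\<forall>S\<in>P. finite S" using assms calculation
    by (metis Union_upper finite_subset)
  ultimately show ?thesis using sum.Union_disjoint_sets[of P h] partition_onD2[OF assms(1)] by simp
qed

lemma exists_blocks:
  fixes r :: nat
  assumes "r > 0"
  shows "finite X \<Longrightarrow> card X = r * k \<Longrightarrow> \<exists>P. partition_on X P \<and> (\<forall>S\<in>P. card S = r)"
proof (induction k arbitrary: X)
  case 0
  then have "X = {}" by simp
  then show ?case by (auto simp: partition_on_empty)
next
  case (Suc k)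
  have "r \<le> card X" using Suc by simp
  then obtain S where S: "S \<subseteq> X" "card S = r" "finite S" by (rule obtain_subset_with_card_n)
  have "card (X - S) = r * k" using Suc S by (simp add: card_Diff_subset)
  then obtain P where P: "partition_on (X - S) P" "\<forall>S\<in>P. card S = r"
    using Suc by blast
  have d: "disjnt S (\<Union>P)" using partition_onD1[OF P(1)] by (auto simp: disjnt_def)
  have "S \<noteq> {}" using S assms by auto
  then have "partition_on X (insert S P)"
    using partition_on_insert[OF d] P S by simp
  then show ?case using P S by auto
qed

definition blk :: "'a set set \<Rightarrow> 'a \<Rightarrow> 'a set" where
  "blk P v = {w. \<exists>S\<in>P. v \<in> S \<and> w \<in> S}"

definition tr :: "'a \<Rightarrow> 'a \<Rightarrow> 'a \<Rightarrow> 'a" where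
  "tr a b x = (if x = a then b else if x = b then a else x)"

lemma tr_tr[simp]: "tr a b (tr a b x) = x" by (simp add: tr_def)
lemma inj_tr: "inj (tr a b)" by (metis injI tr_tr)
lemma tr_img_img[simp]: "tr a b ` (tr a b ` A) = A" by (simp add: image_image)
lemma inj_img_tr: "inj ((`) (tr a b))" by (metis injI tr_img_img)
lemma tr_eq_iff[simp]: "tr a b x = tr a b y \<longleftrightarrow> x = y" by (metis tr_tr)
lemma tr_mem_img[simp]: "tr a b x \<in> tr a b ` A \<longleftrightarrow> x \<in> A" by (auto simp: image_iff)
lemma tr_img_mem: "w \<in> tr a b ` B \<longleftrightarrow> tr a b w \<in> B"
  using tr_mem_img[of a b "tr a b w" B] by simp
lemma tr_img_mem2: "T \<in> (`) (tr a b) ` A \<longleftrightarrow> tr a b ` T \<in> A"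
  by (metis (no_types, lifting) image_eqI imageE tr_img_img)
lemma tr_img_eq_iff[simp]: "tr a b ` A = tr a b ` B \<longleftrightarrow> A = B" by (metis tr_img_img)

locale thm17 =
  fixes V :: "'a set" and E :: "'a \<Rightarrow> 'a \<Rightarrow> bool"
    and f :: "'a \<Rightarrow> 'a set \<Rightarrow> real" and K :: "'a \<Rightarrow> real"
    and n p q r :: nat and Parts :: "'a set set"
  assumes n_pos: "n > 0" and p_pos: "p > 0" and q_pos: "q > 0" and r_def: "r = p + q"
    and sg: "simple_graph V E" and cardV: "card V = r * n"
    and nb: "\<forall>v\<in>V. nbhd E v \<noteq> {}"
    and lip: "\<forall>v\<in>V. lipschitz_fv E (f v) (K v) v"
    and parts: "partition_on V Parts" and dvd: "\<forall>X\<in>Parts. r dvd card X"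
begin

abbreviation "RP \<equiv> restricted_partitions V r Parts"
abbreviation "RT P \<equiv> restricted_T V p P"
abbreviation "Kmax \<equiv> Max (K ` V)"
abbreviation "D \<equiv> min_deg V E"

lemma finV: "finite V" using sg by (simp add: simple_graph_def)
lemma r2: "r \<ge> 2" using p_pos q_pos r_def by simp
lemma Vne: "V \<noteq> {}" using cardV n_pos r2 by auto
lemma nbhd_sub: "nbhd E v \<subseteq> V" using sg by (auto simp: simple_graph_def nbhd_def)
lemma nbhd_irr: "v \<notin> nbhd E v" using sg by (auto simp: simple_graph_def nbhd_def)
lemma nbhd_fin: "finite (nbhd E v)" using nbhd_sub finV finite_subset by blast
lemma deg_pos: "v \<in> V \<Longrightarrow> deg E v > 0"
  using nb nbhd_fin by (simp add: deg_def card_gt_0_iff)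
lemma D_le: "v \<in> V \<Longrightarrow> D \<le> deg E v"
  using finV by (simp add: min_deg_def)
lemma D_pos: "D > 0"
proof -
  have "D \<in> deg E ` V" unfolding min_deg_def using finV Vne by (intro Min_in) auto
  then show ?thesis using deg_pos by auto
qed
lemma K_le: "v \<in> V \<Longrightarrow> K v \<le> Kmax" using finV by simp
lemma K_pos: "v \<in> V \<Longrightarrow> K v > 0" using lip by (simp add: lipschitz_fv_def)
lemma Kmax_pos: "Kmax > 0" using K_le K_pos Vne by force

lemma parts_fin: "X \<in> Parts \<Longrightarrow> finite X"
  using parts finV by (metis Union_upper finite_subset partition_onD1)
lemma parts_sub: "X \<in> Parts \<Longrightarrow> X \<subseteq> V"
  using parts by (metis Union_upper partition_onD1)
lemma parts_disj: "X \<in> Parts \<Longrightarrow> Y \<in> Parts \<Longrightarrow> x \<in> X \<Longrightarrow> x \<in> Y \<Longrightarrow> X = Y"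
  using partition_onD2[OF parts] by (auto simp: disjoint_def)
lemma parts_card: "X \<in> Parts \<Longrightarrow> card X \<ge> r"
proof -
  assume X: "X \<in> Parts"
  then have "X \<noteq> {}" using partition_onD3[OF parts] by auto
  then have "card X > 0" using parts_fin X by (simp add: card_gt_0_iff)
  then show ?thesis using dvd X by (simp add: dvd_imp_le)
qed
lemma parts_ex: "v \<in> V \<Longrightarrow> \<exists>X\<in>Parts. v \<in> X"
  using partition_onD1[OF parts] by auto

lemma RP_D:
  assumes "P \<in> RP"
  shows "partition_on V P" "\<And>S. S \<in> P \<Longrightarrow> card S = r" "\<And>S. S \<in> P \<Longrightarrow> \<exists>X\<in>Parts. S \<subseteq> X"
  using assms by (auto simp: restricted_partitions_def)

lemma RP_sub: "P \<in> RP \<Longrightarrow> S \<in> P \<Longrightarrow> S \<subseteq> V"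
  using RP_D(1) by (metis Union_upper partition_onD1)
lemma RP_fin: "P \<in> RP \<Longrightarrow> S \<in> P \<Longrightarrow> finite S"
  using RP_sub finV finite_subset by blast
lemma RP_disj: "P \<in> RP \<Longrightarrow> S \<in> P \<Longrightarrow> S' \<in> P \<Longrightarrow> x \<in> S \<Longrightarrow> x \<in> S' \<Longrightarrow> S = S'"
  using partition_onD2[OF RP_D(1)] by (auto simp: disjoint_def)
lemma RP_ex: assumes "P \<in> RP" "v \<in> V" shows "\<exists>S\<in>P. v \<in> S"
  using partition_onD1[OF RP_D(1)[OF assms(1)]] assms(2) by auto
lemma blk_eq: "P \<in> RP \<Longrightarrow> S \<in> P \<Longrightarrow> v \<in> S \<Longrightarrow> blk P v = S"
  unfolding blk_def using RP_disj by blast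
lemma blk_parts: "P \<in> RP \<Longrightarrow> X \<in> Parts \<Longrightarrow> v \<in> X \<Longrightarrow> blk P v \<subseteq> X"
proof
  fix w assume P: "P \<in> RP" and X: "X \<in> Parts" "v \<in> X" and w: "w \<in> blk P v"
  then obtain S where S: "S \<in> P" "v \<in> S" "w \<in> S" by (auto simp: blk_def)
  then obtain Y where "Y \<in> Parts" "S \<subseteq> Y" using RP_D(3)[OF P] by blast
  then show "w \<in> X" using parts_disj[OF X(1)] X S by blast
qed
lemma RP_block_cases: "P \<in> RP \<Longrightarrow> S \<in> P \<Longrightarrow> X \<in> Parts \<Longrightarrow> S \<subseteq> X \<or> S \<inter> X = {}"
  using RP_D(3) parts_disj by blast

lemma card_P: "P \<in> RP \<Longrightarrow> card P = n"
proof -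
  assume P: "P \<in> RP"
  have "card V = (\<Sum>v\<in>V. 1::nat)" by simp
  also have "\<dots> = (\<Sum>S\<in>P. \<Sum>v\<in>S. 1)" using sum_over_partition[OF RP_D(1)[OF P] finV] .
  also have "\<dots> = (\<Sum>S\<in>P. r)" using RP_D(2)[OF P] by simp
  finally show ?thesis using cardV r2 by simp
qed

lemma RP_finite: "finite RP"
proof -
  have "RP \<subseteq> Pow (Pow V)" using RP_sub by blast
  then show ?thesis using finV finite_subset by blast
qed

lemma RP_ne: "RP \<noteq> {}"
proof -
  have "\<forall>X\<in>Parts. \<exists>Q. partition_on X Q \<and> (\<forall>S\<in>Q. card S = r)"
  proof
    fix X assume X: "X \<in> Parts"
    have "card X = r * (card X div r)" using dvd X by simp
    then show "\<exists>Q. partition_on X Q \<and> (\<forall>S\<in>Q. card S = r)"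
      using exists_blocks[of r X] r2 parts_fin[OF X] by auto
  qed
  from bchoice[OF this] obtain g where g0: "\<forall>X\<in>Parts. partition_on X (g X) \<and> (\<forall>S\<in>g X. card S = r)"
    by blast
  then have g: "\<And>X. X \<in> Parts \<Longrightarrow> partition_on X (g X) \<and> (\<forall>S\<in>g X. card S = r)" by blast
  define P where "P = \<Union>(g ` Parts)"
  have sub: "S \<in> g X \<Longrightarrow> X \<in> Parts \<Longrightarrow> S \<subseteq> X" for S X
    using g by (metis Union_upper partition_onD1)
  have "partition_on V P"
  proof (rule partition_onI)
    have u: "\<Union>(g X) = X" if "X \<in> Parts" for X using g[OF that] partition_onD1 by metis
    show "\<Union>P = V" unfolding P_def using partition_onD1[OF parts] u by blast
  next
    fix S S' assume "S \<in> P" "S' \<in> P" "S \<noteq> S'"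
    then obtain X X' where X: "X \<in> Parts" "S \<in> g X" "X' \<in> Parts" "S' \<in> g X'"
      unfolding P_def by auto
    show "disjnt S S'"
    proof (cases "X = X'")
      case True
      have "disjoint (g X)" using g[OF X(1)] partition_onD2 by blast
      then show ?thesis using X True \<open>S \<noteq> S'\<close> by (auto simp: disjoint_def pairwise_def)
    next
      case False
      then show ?thesis using sub X parts_disj
        by (metis disjnt_iff subsetD)
    qed
  next
    show "{} \<notin> P" unfolding P_def using g partition_onD3 by fastforce
  qed
  moreover have "\<forall>S\<in>P. card S = r \<and> (\<exists>X\<in>Parts. S \<subseteq> X)"
    unfolding P_def using g sub by blast
  ultimately have "P \<in> RP" by (simp add: restricted_partitions_def)
  then show ?thesis by auto
qed

lemma RT_finite: "finite (RT P)"
proof -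
  have "RT P \<subseteq> Pow V" by (auto simp: restricted_T_def)
  then show ?thesis using finV finite_subset by blast
qed

lemma RT_D: "T \<in> RT P \<Longrightarrow> S \<in> P \<Longrightarrow> card (T \<inter> S) = p"
  by (simp add: restricted_T_def)
lemma RT_sub: "T \<in> RT P \<Longrightarrow> T \<subseteq> V"
  by (simp add: restricted_T_def)
lemma RT_diff: "P \<in> RP \<Longrightarrow> T \<in> RT P \<Longrightarrow> S \<in> P \<Longrightarrow> card (S - T) = q"
proof -
  assume a: "P \<in> RP" "T \<in> RT P" "S \<in> P"
  have "card (S - T) = card S - card (S \<inter> T)"
    using RP_fin[OF a(1,3)] by (simp add: card_Diff_subset_Int)
  also have "\<dots> = q" using RT_D[OF a(2,3)] RP_D(2)[OF a(1) a(3)] r_def by (simp add: Int_commute)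
  finally show ?thesis .
qed

lemma RT_ne: "P \<in> RP \<Longrightarrow> RT P \<noteq> {}"
proof -
  assume P: "P \<in> RP"
  have "\<forall>S\<in>P. \<exists>C. C \<subseteq> S \<and> card C = p"
  proof
    fix S assume "S \<in> P"
    then have "p \<le> card S" using RP_D(2)[OF P] r_def by simp
    then show "\<exists>C. C \<subseteq> S \<and> card C = p" by (meson obtain_subset_with_card_n)
  qed
  from bchoice[OF this] obtain c where c0: "\<forall>S\<in>P. c S \<subseteq> S \<and> card (c S) = p" by blast
  then have c: "\<And>S. S \<in> P \<Longrightarrow> c S \<subseteq> S \<and> card (c S) = p" by blast
  define T where "T = \<Union>(c ` P)"
  have "T \<inter> S = c S" if S: "S \<in> P" for S
  proof
    show "T \<inter> S \<subseteq> c S"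
    proof
      fix x assume "x \<in> T \<inter> S"
      then obtain S' where "S' \<in> P" "x \<in> c S'" "x \<in> S" unfolding T_def by auto
      then show "x \<in> c S" using c RP_disj[OF P S] by (metis subsetD)
    qed
    show "c S \<subseteq> T \<inter> S" using c S unfolding T_def by auto
  qed
  moreover have "T \<subseteq> V" unfolding T_def using c RP_sub[OF P] by blast
  ultimately have "T \<in> RT P" using c by (simp add: restricted_T_def)
  then show ?thesis by auto
qed

lemma swap_RT:
  assumes P: "P \<in> RP" and S: "S \<in> P" and T: "T \<in> RT P" and a: "a \<in> T" "a \<in> S"
    and b: "b \<in> S" "b \<notin> T"
  shows "insert b (T - {a}) \<in> RT P"
proof -
  have "insert b (T - {a}) \<subseteq> V" using RT_sub[OF T] RP_sub[OF P S] b by auto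
  moreover have "card (insert b (T - {a}) \<inter> S'') = p" if S'': "S'' \<in> P" for S''
  proof (cases "S'' = S")
    case True
    have fin: "finite (T \<inter> S)" using RP_fin[OF P S] by simp
    have "insert b (T - {a}) \<inter> S = insert b (T \<inter> S - {a})" using b by auto
    moreover have "card (insert b (T \<inter> S - {a})) = Suc (card (T \<inter> S - {a}))"
      using fin b by simp
    moreover have "card (T \<inter> S - {a}) = card (T \<inter> S) - 1" using fin a by simp
    moreover have "card (T \<inter> S) = p" using RT_D[OF T S] .
    ultimately show ?thesis using True p_pos by simp
  next
    case False
    have "a \<notin> S''" "b \<notin> S''" using RP_disj[OF P S S''] a b False by blast+
    then have "insert b (T - {a}) \<inter> S'' = T \<inter> S''" by auto
    then show ?thesis using RT_D[OF T S''] by simp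
  qed
  ultimately show ?thesis by (simp add: restricted_T_def)
qed

lemma stepA:
  assumes P: "P \<in> RP" and S: "S \<in> P" and v: "v \<in> S"
  shows "\<bar>\<Sum>T\<in>RT P. sigma p q T v * f v (T \<inter> nbhd E v)\<bar>
     \<le> K v / deg E v * (\<Sum>T\<in>RT P. if v \<in> T then real (card (S \<inter> nbhd E v - T)) else 0)"
proof -
  define G where "G T = f v (T \<inter> nbhd E v)" for T
  define A where "A = RT P \<inter> {T. v \<in> T}"
  define B where "B = RT P \<inter> - {T. v \<in> T}"
  have finA: "finite A" and finB: "finite B" using RT_finite by (auto simp: A_def B_def)
  have vV: "v \<in> V" using RP_sub[OF P S] v by auto
  have h1: "(\<Sum>T\<in>RT P. sigma p q T v * G T) = q * (\<Sum>T\<in>A. G T) - p * (\<Sum>T\<in>B. G T)"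
  proof -
    have "(\<Sum>T\<in>RT P. sigma p q T v * G T) = (\<Sum>T\<in>RT P. if v \<in> T then q * G T else - (p * G T))"
      by (intro sum.cong) (auto simp: sigma_def)
    also have "\<dots> = (\<Sum>T\<in>A. q * G T) + (\<Sum>T\<in>B. - (p * G T))"
      unfolding A_def B_def by (rule sum.If_cases[OF RT_finite])
    finally show ?thesis by (simp add: sum_distrib_left sum_negf)
  qed
  define PA where "PA = Sigma A (\<lambda>T. S - T)"
  define PB where "PB = Sigma B (\<lambda>T. S \<inter> T)"
  define hm where "hm x = (insert (snd x) (fst x - {v}), snd x)" for x :: "'a set \<times> 'a"
  define km where "km y = (insert v (fst y - {snd y}), snd y)" for y :: "'a set \<times> 'a"
  have bij: "bij_betw hm PA PB"
  proof (rule bij_betw_byWitness[where f' = km])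
    show "\<forall>x\<in>PA. km (hm x) = x"
      unfolding PA_def A_def hm_def km_def by auto
    show "\<forall>y\<in>PB. hm (km y) = y"
      unfolding PB_def B_def hm_def km_def by auto
    show "hm ` PA \<subseteq> PB"
    proof
      fix y assume "y \<in> hm ` PA"
      then obtain T w where Tw: "T \<in> A" "w \<in> S" "w \<notin> T" and y: "y = hm (T, w)"
        unfolding PA_def by auto
      have "insert w (T - {v}) \<in> RT P"
        using swap_RT[OF P S _ _ v Tw(2,3)] Tw(1) unfolding A_def by auto
      moreover have "w \<noteq> v" using Tw unfolding A_def by auto
      ultimately show "y \<in> PB" using y Tw unfolding PB_def B_def hm_def by auto
    qed
    show "km ` PB \<subseteq> PA"
    proof
      fix y assume "y \<in> km ` PB"
      then obtain T w where Tw: "T \<in> B" "w \<in> S" "w \<in> T" and y: "y = km (T, w)"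
        unfolding PB_def by auto
      have "v \<notin> T" using Tw unfolding B_def by auto
      have "insert v (T - {w}) \<in> RT P"
        using swap_RT[OF P S _ Tw(3) Tw(2) v \<open>v \<notin> T\<close>] Tw(1) unfolding B_def by auto
      moreover have "w \<noteq> v" using Tw \<open>v \<notin> T\<close> by auto
      ultimately show "y \<in> PA" using y Tw unfolding PA_def A_def km_def by auto
    qed
  qed
  have finS: "finite S" using RP_fin[OF P S] .
  have sA: "(\<Sum>x\<in>PA. G (fst x)) = q * (\<Sum>T\<in>A. G T)"
  proof -
    have "(\<Sum>x\<in>PA. G (fst x)) = (\<Sum>T\<in>A. \<Sum>w\<in>S - T. G T)"
      unfolding PA_def using sum.Sigma[OF finA, of "\<lambda>T. S - T" "\<lambda>T w. G T"] finS
      by (simp add: case_prod_beta')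
    also have "\<dots> = (\<Sum>T\<in>A. q * G T)"
      using RT_diff[OF P _ S] unfolding A_def by (intro sum.cong) auto
    finally show ?thesis by (simp add: sum_distrib_left)
  qed
  have sB: "(\<Sum>x\<in>PB. G (fst x)) = p * (\<Sum>T\<in>B. G T)"
  proof -
    have "(\<Sum>x\<in>PB. G (fst x)) = (\<Sum>T\<in>B. \<Sum>w\<in>S \<inter> T. G T)"
      unfolding PB_def using sum.Sigma[OF finB, of "\<lambda>T. S \<inter> T" "\<lambda>T w. G T"] finS
      by (simp add: case_prod_beta')
    also have "\<dots> = (\<Sum>T\<in>B. p * G T)"
      using RT_D[OF _ S] unfolding B_def by (intro sum.cong) (auto simp: Int_commute)
    finally show ?thesis by (simp add: sum_distrib_left)
  qed
  have sH: "(\<Sum>x\<in>PA. G (fst (hm x))) = p * (\<Sum>T\<in>B. G T)"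
    using sum.reindex_bij_betw[OF bij, of "\<lambda>y. G (fst y)"] sB by simp
  have key: "(\<Sum>T\<in>RT P. sigma p q T v * G T) = (\<Sum>x\<in>PA. G (fst x) - G (fst (hm x)))"
    using h1 sA sH by (simp add: sum_subtractf)
  have lipv: "lipschitz_fv E (f v) (K v) v" using lip vV by blast
  have tm: "\<bar>G (fst x) - G (fst (hm x))\<bar> \<le> (if snd x \<in> nbhd E v then K v / deg E v else 0)"
    if x: "x \<in> PA" for x
  proof -
    obtain T w where xe: "x = (T, w)" by fastforce
    have Tw: "v \<in> T" "w \<in> S" "w \<notin> T" using x unfolding xe PA_def A_def by auto
    have vn: "v \<notin> nbhd E v" by (rule nbhd_irr)
    show ?thesis
    proof (cases "w \<in> nbhd E v")
      case True
      have e: "insert w (T - {v}) \<inter> nbhd E v = insert w (T \<inter> nbhd E v)" using True vn by auto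
      have "\<bar>f v (T \<inter> nbhd E v) - f v (insert w (T \<inter> nbhd E v))\<bar>
          \<le> K v * real (card (T \<inter> nbhd E v - insert w (T \<inter> nbhd E v) \<union> (insert w (T \<inter> nbhd E v) - T \<inter> nbhd E v))) / real (deg E v)"
        using lipv True unfolding lipschitz_fv_def by auto
      moreover have "T \<inter> nbhd E v - insert w (T \<inter> nbhd E v) \<union> (insert w (T \<inter> nbhd E v) - T \<inter> nbhd E v) = {w}"
        using Tw by auto
      ultimately show ?thesis using True e unfolding xe G_def hm_def by simp
    next
      case False
      have "insert w (T - {v}) \<inter> nbhd E v = T \<inter> nbhd E v" using False vn by auto
      then show ?thesis using False unfolding xe G_def hm_def by simp
    qed
  qed
  have "\<bar>\<Sum>T\<in>RT P. sigma p q T v * G T\<bar> \<le> (\<Sum>x\<in>PA. \<bar>G (fst x) - G (fst (hm x))\<bar>)"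
    unfolding key by (rule sum_abs)
  also have "\<dots> \<le> (\<Sum>x\<in>PA. if snd x \<in> nbhd E v then K v / deg E v else 0)"
    using tm by (rule sum_mono)
  also have "\<dots> = (\<Sum>T\<in>A. \<Sum>w\<in>S - T. if w \<in> nbhd E v then K v / deg E v else 0)"
    unfolding PA_def using sum.Sigma[OF finA, of "\<lambda>T. S - T" "\<lambda>T w. if w \<in> nbhd E v then K v / deg E v else 0"] finS
    by (simp add: case_prod_beta')
  also have "\<dots> = (\<Sum>T\<in>A. K v / deg E v * real (card (S \<inter> nbhd E v - T)))"
  proof (rule sum.cong[OF refl])
    fix T assume "T \<in> A"
    have "(\<Sum>w\<in>S - T. if w \<in> nbhd E v then K v / deg E v else 0) = (\<Sum>w\<in>(S - T) \<inter> nbhd E v. K v / deg E v)"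
      using finS by (simp add: sum.If_cases)
    also have "(S - T) \<inter> nbhd E v = S \<inter> nbhd E v - T" by auto
    finally show "(\<Sum>w\<in>S - T. if w \<in> nbhd E v then K v / deg E v else 0) = K v / deg E v * real (card (S \<inter> nbhd E v - T))"
      by simp
  qed
  also have "\<dots> = K v / deg E v * (\<Sum>T\<in>RT P. if v \<in> T then real (card (S \<inter> nbhd E v - T)) else 0)"
    unfolding A_def by (simp add: sum_distrib_left sum.If_cases[OF RT_finite])
  finally show ?thesis unfolding G_def .
qed

definition Cv :: "'a set set \<Rightarrow> 'a \<Rightarrow> real" where
  "Cv P v = (\<Sum>T\<in>RT P. if v \<in> T then real (card (blk P v \<inter> nbhd E v - T)) else 0)"

definition Y :: "'a set set \<Rightarrow> real" where
  "Y P = Kmax / (real p * real q * real n * real (card (RT P))) * (\<Sum>v\<in>V. Cv P v / real (deg E v))"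

lemma Cv_nonneg: "Cv P v \<ge> 0" unfolding Cv_def by (intro sum_nonneg) auto

lemma ET_xi:
  assumes P: "P \<in> RP"
  shows "\<bar>measure_pmf.expectation (pmf_of_set (RT P)) (\<lambda>T. xi V E f p q n T)\<bar> \<le> Y P"
proof -
  have ne: "RT P \<noteq> {}" using RT_ne[OF P] .
  have cpos: "real (card (RT P)) > 0" using ne RT_finite by (simp add: card_gt_0_iff)
  have e1: "measure_pmf.expectation (pmf_of_set (RT P)) (\<lambda>T. xi V E f p q n T)
      = (\<Sum>T\<in>RT P. xi V E f p q n T) / card (RT P)"
    using integral_pmf_of_set[OF ne RT_finite] by simp
  have e2: "(\<Sum>T\<in>RT P. xi V E f p q n T)
      = (1 / (real p * real q * real n)) * (\<Sum>v\<in>V. \<Sum>T\<in>RT P. sigma p q T v * f v (T \<inter> nbhd E v))"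
    unfolding xi_def by (simp add: sum_distrib_left sum.swap[of _ "RT P" V])
  have b: "\<bar>\<Sum>T\<in>RT P. sigma p q T v * f v (T \<inter> nbhd E v)\<bar> \<le> Kmax * (Cv P v / real (deg E v))"
    if v: "v \<in> V" for v
  proof -
    obtain S where S: "S \<in> P" "v \<in> S" using RP_ex[OF P v] by blast
    have bl: "blk P v = S" using blk_eq[OF P S] .
    have "\<bar>\<Sum>T\<in>RT P. sigma p q T v * f v (T \<inter> nbhd E v)\<bar> \<le> K v / deg E v * Cv P v"
      using stepA[OF P S] unfolding Cv_def bl .
    also have "\<dots> \<le> Kmax / deg E v * Cv P v"
      using K_le[OF v] deg_pos[OF v] Cv_nonneg
      by (intro mult_right_mono divide_right_mono) auto
    finally show ?thesis by simp
  qed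
  have "\<bar>\<Sum>v\<in>V. \<Sum>T\<in>RT P. sigma p q T v * f v (T \<inter> nbhd E v)\<bar>
      \<le> (\<Sum>v\<in>V. \<bar>\<Sum>T\<in>RT P. sigma p q T v * f v (T \<inter> nbhd E v)\<bar>)" by (rule sum_abs)
  also have "\<dots> \<le> (\<Sum>v\<in>V. Kmax * (Cv P v / real (deg E v)))" using b by (rule sum_mono)
  finally have b2: "\<bar>\<Sum>v\<in>V. \<Sum>T\<in>RT P. sigma p q T v * f v (T \<inter> nbhd E v)\<bar>
      \<le> Kmax * (\<Sum>v\<in>V. Cv P v / real (deg E v))" by (simp add: sum_distrib_left)
  have pq: "real p * real q * real n > 0" using p_pos q_pos n_pos by simp
  have "\<bar>measure_pmf.expectation (pmf_of_set (RT P)) (\<lambda>T. xi V E f p q n T)\<bar>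
     = \<bar>\<Sum>v\<in>V. \<Sum>T\<in>RT P. sigma p q T v * f v (T \<inter> nbhd E v)\<bar> / (real p * real q * real n * real (card (RT P)))"
    unfolding e1 e2 using pq cpos by (simp add: abs_mult abs_divide)
  also have "\<dots> \<le> Kmax * (\<Sum>v\<in>V. Cv P v / real (deg E v)) / (real p * real q * real n * real (card (RT P)))"
    using b2 pq cpos by (intro divide_right_mono) auto
  also have "\<dots> = Y P" unfolding Y_def by simp
  finally show ?thesis .
qed

lemma card_T: assumes P: "P \<in> RP" and T: "T \<in> RT P" shows "card T = p * n"
proof -
  have "card T = card (V \<inter> T)" using RT_sub[OF T] by (simp add: Int_absorb1)
  also have "\<dots> = (\<Sum>v\<in>V. if v \<in> T then 1 else 0)" using finV by (simp add: sum.If_cases)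
  also have "\<dots> = (\<Sum>S\<in>P. \<Sum>v\<in>S. if v \<in> T then 1 else 0)"
    by (rule sum_over_partition[OF RP_D(1)[OF P] finV])
  also have "\<dots> = (\<Sum>S\<in>P. p)"
  proof (rule sum.cong[OF refl])
    fix S assume S: "S \<in> P"
    have "(\<Sum>v\<in>S. if v \<in> T then 1 else 0) = card (S \<inter> T)"
      using RP_fin[OF P S] by (simp add: sum.If_cases)
    then show "(\<Sum>v\<in>S. if v \<in> T then 1 else 0) = p" using RT_D[OF T S] by (simp add: Int_commute)
  qed
  finally show ?thesis using card_P[OF P] by simp
qed

lemma Y_nonneg: "P \<in> RP \<Longrightarrow> Y P \<ge> 0"
  unfolding Y_def using Kmax_pos Cv_nonneg
  by (intro mult_nonneg_nonneg sum_nonneg divide_nonneg_nonneg) auto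

lemma Y_le: assumes P: "P \<in> RP" shows "Y P \<le> Kmax / D"
proof -
  have cpos: "real (card (RT P)) > 0" using RT_ne[OF P] RT_finite by (simp add: card_gt_0_iff)
  have pq: "real p * real q * real n > 0" using p_pos q_pos n_pos by simp
  have Dp: "real D > 0" using D_pos by simp
  have c1: "Cv P v \<le> (\<Sum>T\<in>RT P. if v \<in> T then real q else 0)" if v: "v \<in> V" for v
    unfolding Cv_def
  proof (rule sum_mono)
    fix T assume T: "T \<in> RT P"
    obtain S where S: "S \<in> P" "v \<in> S" using RP_ex[OF P v] by blast
    have "card (blk P v \<inter> nbhd E v - T) \<le> card (S - T)"
      using blk_eq[OF P S] RP_fin[OF P S(1)] by (intro card_mono) auto
    then show "(if v \<in> T then real (card (blk P v \<inter> nbhd E v - T)) else 0) \<le> (if v \<in> T then real q else 0)"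
      using RT_diff[OF P T S(1)] by auto
  qed
  have "(\<Sum>v\<in>V. Cv P v / real (deg E v)) \<le> (\<Sum>v\<in>V. Cv P v / real D)"
    using Cv_nonneg D_le Dp deg_pos by (intro sum_mono divide_left_mono) auto
  also have "\<dots> = (\<Sum>v\<in>V. Cv P v) / real D" by (simp add: sum_divide_distrib)
  also have "\<dots> \<le> (\<Sum>v\<in>V. \<Sum>T\<in>RT P. if v \<in> T then real q else 0) / real D"
    using c1 Dp by (intro divide_right_mono sum_mono) auto
  also have "(\<Sum>v\<in>V. \<Sum>T\<in>RT P. if v \<in> T then real q else 0) = (\<Sum>T\<in>RT P. \<Sum>v\<in>V. if v \<in> T then real q else 0)"
    by (rule sum.swap)
  also have "\<dots> = (\<Sum>T\<in>RT P. real q * real (p * n))"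
  proof (rule sum.cong[OF refl])
    fix T assume T: "T \<in> RT P"
    have "(\<Sum>v\<in>V. if v \<in> T then real q else 0) = real q * card (V \<inter> T)"
      using finV by (simp add: sum.If_cases)
    also have "V \<inter> T = T" using RT_sub[OF T] by auto
    finally show "(\<Sum>v\<in>V. if v \<in> T then real q else 0) = real q * real (p * n)" using card_T[OF P T] by simp
  qed
  also have "\<dots> = real (card (RT P)) * (real p * real q * real n)" by simp
  finally have s: "(\<Sum>v\<in>V. Cv P v / real (deg E v)) \<le> real (card (RT P)) * (real p * real q * real n) / real D" .
  have "Y P \<le> Kmax / (real p * real q * real n * real (card (RT P))) * (real (card (RT P)) * (real p * real q * real n) / real D)"
    unfolding Y_def using s Kmax_pos pq cpos by (intro mult_left_mono) auto
  also have "\<dots> = Kmax / D" using pq cpos p_pos q_pos n_pos by (simp add: field_simps)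
  finally show ?thesis .
qed

lemma sq_bound: assumes P: "P \<in> RP"
  shows "(measure_pmf.expectation (pmf_of_set (RT P)) (\<lambda>T. xi V E f p q n T))\<^sup>2 \<le> Kmax / D * Y P"
proof -
  let ?x = "measure_pmf.expectation (pmf_of_set (RT P)) (\<lambda>T. xi V E f p q n T)"
  have "?x\<^sup>2 = \<bar>?x\<bar> * \<bar>?x\<bar>" by (simp add: power2_eq_square)
  also have "\<dots> \<le> Y P * Y P" using ET_xi[OF P] by (intro mult_mono) auto
  also have "\<dots> \<le> Kmax / D * Y P" using Y_le[OF P] Y_nonneg[OF P] by (intro mult_right_mono) auto
  finally show ?thesis .
qed

end


context thm17 begin

definition cnt :: "'a set set \<Rightarrow> 'a \<Rightarrow> 'a \<Rightarrow> nat" where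
  "cnt P v u = card {T\<in>RT P. v \<in> T \<and> u \<notin> T \<and> u \<in> blk P v}"

definition F :: "'a \<Rightarrow> 'a \<Rightarrow> real" where
  "F v u = (\<Sum>P\<in>RP. real (cnt P v u) / (real (card RP) * real (card (RT P))))"

lemma tr_fix: "(a \<in> Z \<longleftrightarrow> b \<in> Z) \<Longrightarrow> tr a b ` Z = Z"
proof -
  assume ab: "a \<in> Z \<longleftrightarrow> b \<in> Z"
  have sub: "tr a b ` Z \<subseteq> Z" using ab by (auto simp: tr_def)
  moreover have "Z \<subseteq> tr a b ` Z"
  proof
    fix y assume "y \<in> Z"
    then have "tr a b y \<in> Z" using sub by auto
    then show "y \<in> tr a b ` Z" by (metis image_eqI tr_tr)
  qed
  ultimately show ?thesis by blast
qed

context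
  fixes X a b
  assumes X: "X \<in> Parts" and a: "a \<in> X" and b: "b \<in> X"
begin

lemma trP_parts: "Y' \<in> Parts \<Longrightarrow> tr a b ` Y' = Y'"
  using parts_disj[OF X] a b by (intro tr_fix) blast

lemma trV: "tr a b ` V = V"
  using parts_sub[OF X] a b by (intro tr_fix) blast

lemma trP_RP: assumes P: "P \<in> RP" shows "(`) (tr a b) ` P \<in> RP"
proof -
  have "partition_on (tr a b ` V) ((`) (tr a b) ` P - {{}})"
    using partition_on_inj_image[OF RP_D(1)[OF P] inj_on_subset[OF inj_tr subset_UNIV]] .
  moreover have "(`) (tr a b) ` P - {{}} = (`) (tr a b) ` P"
    using partition_onD3[OF RP_D(1)[OF P]] by auto
  ultimately have "partition_on V ((`) (tr a b) ` P)" using trV by simp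
  moreover have "\<forall>S\<in>(`) (tr a b) ` P. card S = r \<and> (\<exists>X'\<in>Parts. S \<subseteq> X')"
  proof
    fix S' assume "S' \<in> (`) (tr a b) ` P"
    then obtain S where S: "S \<in> P" "S' = tr a b ` S" by auto
    have "card S' = r" using S RP_D(2)[OF P S(1)] card_image[OF inj_on_subset[OF inj_tr]] by auto
    moreover obtain X' where "X' \<in> Parts" "S \<subseteq> X'" using RP_D(3)[OF P S(1)] by blast
    then have "S' \<subseteq> X'" using S trP_parts by blast
    ultimately show "card S' = r \<and> (\<exists>X'\<in>Parts. S' \<subseteq> X')" using \<open>X' \<in> Parts\<close> by blast
  qed
  ultimately show ?thesis unfolding restricted_partitions_def by blast
qed

lemma trP_inv[simp]: "(`) (tr a b) ` ((`) (tr a b) ` P) = P"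
  by (simp add: image_image)

lemma tr_RT: assumes T: "T \<in> RT P" shows "tr a b ` T \<in> RT ((`) (tr a b) ` P)"
proof -
  have "tr a b ` T \<subseteq> V" using RT_sub[OF T] trV by blast
  moreover have "card (tr a b ` T \<inter> S') = p" if S'': "S' \<in> (`) (tr a b) ` P" for S'
  proof -
    obtain S where S: "S \<in> P" "S' = tr a b ` S" using S'' by blast
    have "tr a b ` T \<inter> tr a b ` S = tr a b ` (T \<inter> S)" by (rule image_Int[OF inj_tr, symmetric])
    moreover have "card (tr a b ` (T \<inter> S)) = card (T \<inter> S)"
      by (rule card_image[OF inj_on_subset[OF inj_tr subset_UNIV]])
    ultimately show ?thesis unfolding S(2) using RT_D[OF T S(1)] by simp
  qed
  ultimately show ?thesis unfolding restricted_T_def by blast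
qed

lemma RT_tr_eq: "RT ((`) (tr a b) ` P) = (`) (tr a b) ` RT P"
proof
  show "(`) (tr a b) ` RT P \<subseteq> RT ((`) (tr a b) ` P)" using tr_RT by blast
  show "RT ((`) (tr a b) ` P) \<subseteq> (`) (tr a b) ` RT P"
  proof
    fix T' assume "T' \<in> RT ((`) (tr a b) ` P)"
    then have "tr a b ` T' \<in> RT P" using tr_RT[of T' "(`) (tr a b) ` P"] by simp
    moreover have "T' = tr a b ` (tr a b ` T')" by simp
    ultimately show "T' \<in> (`) (tr a b) ` RT P" by blast
  qed
qed

lemma card_RT_tr: "card (RT ((`) (tr a b) ` P)) = card (RT P)"
  unfolding RT_tr_eq by (rule card_image[OF inj_on_subset[OF inj_img_tr subset_UNIV]])

lemma blk_tr: "blk ((`) (tr a b) ` P) (tr a b v) = tr a b ` blk P v"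
proof (rule set_eqI)
  fix w
  have "w \<in> blk ((`) (tr a b) ` P) (tr a b v) \<longleftrightarrow> (\<exists>S\<in>P. tr a b v \<in> tr a b ` S \<and> w \<in> tr a b ` S)"
    by (auto simp: blk_def)
  also have "\<dots> \<longleftrightarrow> (\<exists>S\<in>P. v \<in> S \<and> tr a b w \<in> S)"
    by (simp only: tr_mem_img tr_img_mem tr_tr)
  also have "\<dots> \<longleftrightarrow> w \<in> tr a b ` blk P v"
    by (simp only: tr_img_mem) (simp add: blk_def)
  finally show "w \<in> blk ((`) (tr a b) ` P) (tr a b v) \<longleftrightarrow> w \<in> tr a b ` blk P v" .
qed

lemma cnt_tr: "cnt ((`) (tr a b) ` P) (tr a b v) (tr a b u) = cnt P v u"
proof -
  let ?pi = "tr a b"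
  have "{T\<in>RT ((`) ?pi ` P). ?pi v \<in> T \<and> ?pi u \<notin> T \<and> ?pi u \<in> blk ((`) ?pi ` P) (?pi v)}
      = (`) ?pi ` {T\<in>RT P. v \<in> T \<and> u \<notin> T \<and> u \<in> blk P v}"
  proof (rule set_eqI)
    fix T'
    have 1: "T' \<in> (`) ?pi ` RT P \<longleftrightarrow> ?pi ` T' \<in> RT P" by (rule tr_img_mem2)
    have 2: "?pi v \<in> T' \<longleftrightarrow> v \<in> ?pi ` T'" by (simp only: tr_img_mem)
    have 3: "?pi u \<in> T' \<longleftrightarrow> u \<in> ?pi ` T'" by (simp only: tr_img_mem)
    have 4: "T' \<in> (`) ?pi ` {T\<in>RT P. v \<in> T \<and> u \<notin> T \<and> u \<in> blk P v} \<longleftrightarrow>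
        ?pi ` T' \<in> {T\<in>RT P. v \<in> T \<and> u \<notin> T \<and> u \<in> blk P v}" by (rule tr_img_mem2)
    show "T' \<in> {T\<in>RT ((`) ?pi ` P). ?pi v \<in> T \<and> ?pi u \<notin> T \<and> ?pi u \<in> blk ((`) ?pi ` P) (?pi v)}
      \<longleftrightarrow> T' \<in> (`) ?pi ` {T\<in>RT P. v \<in> T \<and> u \<notin> T \<and> u \<in> blk P v}"
      unfolding 4 mem_Collect_eq RT_tr_eq blk_tr 1 2 3 tr_mem_img ..
  qed
  then show ?thesis unfolding cnt_def by (simp only: card_image[OF inj_on_subset[OF inj_img_tr subset_UNIV]])
qed

lemma F_tr: "F (tr a b v) (tr a b u) = F v u"
proof -
  let ?Pi = "(`) ((`) (tr a b))"
  have inj: "inj_on ((`) ((`) (tr a b))) RP"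
  proof (rule inj_onI)
    fix P Q assume "(`) (tr a b) ` P = (`) (tr a b) ` Q"
    then have "(`) (tr a b) ` ((`) (tr a b) ` P) = (`) (tr a b) ` ((`) (tr a b) ` Q)" by (rule arg_cong)
    then show "P = Q" by (simp only: trP_inv)
  qed
  have img: "((`) ((`) (tr a b))) ` RP = RP"
  proof
    show "((`) ((`) (tr a b))) ` RP \<subseteq> RP" using trP_RP by blast
    show "RP \<subseteq> ((`) ((`) (tr a b))) ` RP"
    proof
      fix P assume "P \<in> RP"
      then have "(`) (tr a b) ` P \<in> RP" by (rule trP_RP)
      moreover have "P = (`) (tr a b) ` ((`) (tr a b) ` P)" by (simp only: trP_inv)
      ultimately show "P \<in> ((`) ((`) (tr a b))) ` RP" by (rule rev_image_eqI)
    qed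
  qed
  have "F (tr a b v) (tr a b u) = (\<Sum>P\<in>((`) ((`) (tr a b))) ` RP. real (cnt P (tr a b v) (tr a b u)) / (real (card RP) * real (card (RT P))))"
    unfolding F_def img ..
  also have "\<dots> = (\<Sum>P\<in>RP. real (cnt ((`) (tr a b) ` P) (tr a b v) (tr a b u)) / (real (card RP) * real (card (RT ((`) (tr a b) ` P)))))"
    by (simp only: sum.reindex[OF inj] comp_def)
  also have "\<dots> = F v u" unfolding F_def cnt_tr card_RT_tr ..
  finally show ?thesis .
qed

end

lemma tr_a[simp]: "tr a b a = b" and tr_b[simp]: "tr a b b = a"
  and tr_o: "x \<noteq> a \<Longrightarrow> x \<noteq> b \<Longrightarrow> tr a b x = x"
  by (auto simp: tr_def)

lemma F_const:
  assumes X: "X \<in> Parts" and in1: "v \<in> X" "u \<in> X" "v' \<in> X" "u' \<in> X" and ne: "v \<noteq> u" "v' \<noteq> u'"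
  shows "F v u = F v' u'"
proof (cases "u = v'")
  case False
  have 1: "F v' u = F v u" using F_tr[OF X in1(1) in1(3), of v u] False ne by (simp add: tr_o)
  have 2: "F v' u' = F v' u" using F_tr[OF X in1(2) in1(4), of v' u] False ne
    by (cases "v' = u'") (auto simp: tr_o)
  show ?thesis using 1 2 by simp
next
  case True
  show ?thesis
  proof (cases "v = u'")
    case True
    then show ?thesis using F_tr[OF X in1(1) in1(2), of v u] \<open>u = v'\<close> by simp
  next
    case False
    have 1: "F v u' = F v u" using F_tr[OF X in1(2) in1(4), of v u] False ne \<open>u = v'\<close>
      by (cases "u = u'") (auto simp: tr_o)
    have 2: "F v' u' = F v u'" using F_tr[OF X in1(1) in1(3), of v u'] False ne \<open>u = v'\<close>
      by (simp add: tr_o)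
    show ?thesis using 1 2 by simp
  qed
qed


end


context thm17 begin

lemma card_split: assumes P: "P \<in> RP" and B: "B \<subseteq> V" shows "card B = (\<Sum>S\<in>P. card (S \<inter> B))"
proof -
  have "card B = card (V \<inter> B)" using B by (simp add: Int_absorb1)
  also have "\<dots> = (\<Sum>v\<in>V. if v \<in> B then 1 else 0)" using finV by (simp add: sum.If_cases)
  also have "\<dots> = (\<Sum>S\<in>P. \<Sum>v\<in>S. if v \<in> B then 1 else 0)"
    by (rule sum_over_partition[OF RP_D(1)[OF P] finV])
  also have "\<dots> = (\<Sum>S\<in>P. card (S \<inter> B))"
    using RP_fin[OF P] by (intro sum.cong) (auto simp: sum.If_cases)
  finally show ?thesis .
qed

lemma card_XT: assumes P: "P \<in> RP" and T: "T \<in> RT P" and X: "X \<in> Parts"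
  shows "card (X \<inter> T) * r = p * card X"
proof -
  have "card (X \<inter> T) * r = (\<Sum>S\<in>P. card (S \<inter> (X \<inter> T)) * r)"
  proof -
    have "X \<inter> T \<subseteq> V" using parts_sub[OF X] by blast
    then show ?thesis using card_split[OF P, of "X \<inter> T"] by (simp add: sum_distrib_right)
  qed
  also have "\<dots> = (\<Sum>S\<in>P. p * card (S \<inter> X))"
  proof (rule sum.cong[OF refl])
    fix S assume S: "S \<in> P"
    show "card (S \<inter> (X \<inter> T)) * r = p * card (S \<inter> X)"
    proof (cases "S \<subseteq> X")
      case True
      then have "S \<inter> (X \<inter> T) = T \<inter> S" "S \<inter> X = S" by auto
      then show ?thesis using RT_D[OF T S] RP_D(2)[OF P S] by simp
    next
      case False
      then have "S \<inter> X = {}" using RP_block_cases[OF P S X] by blast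
      then have "S \<inter> (X \<inter> T) = {}" by blast
      then show ?thesis using \<open>S \<inter> X = {}\<close> by simp
    qed
  qed
  also have "\<dots> = p * card X"
    using card_split[OF P parts_sub[OF X]] by (simp add: sum_distrib_left)
  finally show ?thesis .
qed

lemma cnt_sum_eq: "cnt P v u = (\<Sum>T\<in>RT P. if v \<in> T \<and> u \<notin> T \<and> u \<in> blk P v then 1 else 0)"
proof -
  let ?Q = "\<lambda>T. v \<in> T \<and> u \<notin> T \<and> u \<in> blk P v"
  have "(\<Sum>T\<in>RT P. if ?Q T then 1 else 0) = (\<Sum>T\<in>RT P. of_bool (?Q T) :: nat)"
    by (intro sum.cong) auto
  also have "\<dots> = card (RT P \<inter> {T. ?Q T})" using RT_finite by simp
  also have "RT P \<inter> {T. ?Q T} = {T\<in>RT P. ?Q T}" by blast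
  finally show ?thesis unfolding cnt_def by simp
qed

lemma cnt_total: assumes P: "P \<in> RP" and X: "X \<in> Parts"
  shows "(\<Sum>v\<in>X. \<Sum>u\<in>X - {v}. cnt P v u) * r = card (RT P) * (q * (p * card X))"
proof -
  have inner: "(\<Sum>v\<in>X. \<Sum>u\<in>X - {v}. if v \<in> T \<and> u \<notin> T \<and> u \<in> blk P v then 1 else 0) = q * card (X \<inter> T)"
    if T: "T \<in> RT P" for T
  proof -
    have "(\<Sum>v\<in>X. \<Sum>u\<in>X - {v}. if v \<in> T \<and> u \<notin> T \<and> u \<in> blk P v then 1 else 0)
        = (\<Sum>v\<in>X. if v \<in> T then q else 0)"
    proof (rule sum.cong[OF refl])
      fix v assume v: "v \<in> X"
      show "(\<Sum>u\<in>X - {v}. if v \<in> T \<and> u \<notin> T \<and> u \<in> blk P v then 1 else 0) = (if v \<in> T then q else 0)"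
      proof (cases "v \<in> T")
        case True
        have vV: "v \<in> V" using parts_sub[OF X] v by auto
        obtain S where S: "S \<in> P" "v \<in> S" using RP_ex[OF P vV] by blast
        have bl: "blk P v = S" using blk_eq[OF P S] .
        have "(\<Sum>u\<in>X - {v}. if v \<in> T \<and> u \<notin> T \<and> u \<in> blk P v then 1 else 0) = card ((X - {v}) \<inter> {u. u \<notin> T \<and> u \<in> blk P v})"
          using True parts_fin[OF X] by (simp add: sum.If_cases)
        also have "(X - {v}) \<inter> {u. u \<notin> T \<and> u \<in> blk P v} = S - T"
          using blk_parts[OF P X v] bl True by auto
        finally show ?thesis using True RT_diff[OF P T S(1)] by simp
      qed simp
    qed
    also have "\<dots> = q * card (X \<inter> T)" using parts_fin[OF X] by (simp add: sum.If_cases)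
    finally show ?thesis .
  qed
  have "(\<Sum>v\<in>X. \<Sum>u\<in>X - {v}. cnt P v u)
      = (\<Sum>v\<in>X. \<Sum>u\<in>X - {v}. \<Sum>T\<in>RT P. if v \<in> T \<and> u \<notin> T \<and> u \<in> blk P v then 1 else 0)"
    by (simp only: cnt_sum_eq)
  also have "\<dots> = (\<Sum>T\<in>RT P. \<Sum>v\<in>X. \<Sum>u\<in>X - {v}. if v \<in> T \<and> u \<notin> T \<and> u \<in> blk P v then 1 else 0)"
  proof -
    have "(\<Sum>v\<in>X. \<Sum>u\<in>X - {v}. \<Sum>T\<in>RT P. if v \<in> T \<and> u \<notin> T \<and> u \<in> blk P v then 1 else 0)
      = (\<Sum>v\<in>X. \<Sum>T\<in>RT P. \<Sum>u\<in>X - {v}. if v \<in> T \<and> u \<notin> T \<and> u \<in> blk P v then (1::nat) else 0)"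
      by (rule sum.cong[OF refl], rule sum.swap)
    also have "\<dots> = (\<Sum>T\<in>RT P. \<Sum>v\<in>X. \<Sum>u\<in>X - {v}. if v \<in> T \<and> u \<notin> T \<and> u \<in> blk P v then 1 else 0)"
      by (rule sum.swap)
    finally show ?thesis .
  qed
  also have "\<dots> = (\<Sum>T\<in>RT P. q * card (X \<inter> T))" using inner by (intro sum.cong) auto
  finally have "(\<Sum>v\<in>X. \<Sum>u\<in>X - {v}. cnt P v u) * r = (\<Sum>T\<in>RT P. q * (card (X \<inter> T) * r))"
    by (simp add: sum_distrib_right mult.assoc)
  also have "\<dots> = (\<Sum>T\<in>RT P. q * (p * card X))" using card_XT[OF P _ X] by (intro sum.cong) auto
  finally show ?thesis by simp
qed

lemma RP_card_pos: "real (card RP) > 0" using RP_finite RP_ne by (simp add: card_gt_0_iff)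
lemma RT_card_pos: "P \<in> RP \<Longrightarrow> real (card (RT P)) > 0" using RT_finite RT_ne by (simp add: card_gt_0_iff)

lemma F_total: assumes X: "X \<in> Parts"
  shows "(\<Sum>v\<in>X. \<Sum>u\<in>X - {v}. F v u) = real p * real q * real (card X) / real r"
proof -
  have rpos: "real r > 0" using r2 by simp
  have "(\<Sum>v\<in>X. \<Sum>u\<in>X - {v}. F v u)
     = (\<Sum>v\<in>X. \<Sum>P\<in>RP. \<Sum>u\<in>X - {v}. real (cnt P v u) / (real (card RP) * real (card (RT P))))"
    unfolding F_def by (rule sum.cong[OF refl], rule sum.swap)
  also have "\<dots> = (\<Sum>P\<in>RP. \<Sum>v\<in>X. \<Sum>u\<in>X - {v}. real (cnt P v u) / (real (card RP) * real (card (RT P))))"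
    by (rule sum.swap)
  also have "\<dots> = (\<Sum>P\<in>RP. real ((\<Sum>v\<in>X. \<Sum>u\<in>X - {v}. cnt P v u) * r) / (real (card RP) * real (card (RT P)) * real r))"
    using rpos by (intro sum.cong[OF refl]) (simp add: sum_divide_distrib)
  also have "\<dots> = (\<Sum>P\<in>RP. real p * real q * real (card X) / real r / real (card RP))"
  proof (rule sum.cong[OF refl])
    fix P assume P: "P \<in> RP"
    show "real ((\<Sum>v\<in>X. \<Sum>u\<in>X - {v}. cnt P v u) * r) / (real (card RP) * real (card (RT P)) * real r)
        = real p * real q * real (card X) / real r / real (card RP)"
      unfolding cnt_total[OF P X] using RT_card_pos[OF P] RP_card_pos rpos by (simp add: field_simps)
  qed
  also have "\<dots> = real p * real q * real (card X) / real r" using RP_card_pos by simp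
  finally show ?thesis .
qed

lemma card_parts2: "X \<in> Parts \<Longrightarrow> card X \<ge> 2" using parts_card r2 by fastforce

lemma F_val: assumes X: "X \<in> Parts" and v: "v \<in> X" and u: "u \<in> X" and vu: "v \<noteq> u"
  shows "F v u = real p * real q / (real r * real (card X - 1))"
proof -
  have c2: "card X \<ge> 2" using card_parts2[OF X] .
  have fin: "finite X" using parts_fin[OF X] .
  have "(\<Sum>v'\<in>X. \<Sum>u'\<in>X - {v'}. F v' u') = (\<Sum>v'\<in>X. \<Sum>u'\<in>X - {v'}. F v u)"
    using F_const[OF X v u _ _ vu] by (intro sum.cong refl) auto
  also have "\<dots> = real (card X) * (real (card X - 1) * F v u)"
    using fin by simp
  finally have eq: "real (card X) * (real (card X - 1) * F v u) = real p * real q * real (card X) / real r"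
    using F_total[OF X] by simp
  have pos1: "real (card X) > 0" "real (card X - 1) > 0" "real r > 0" using c2 r2 by auto
  define d where "d = real (card X - 1)"
  define c where "c = real (card X)"
  have eq2: "c * (d * F v u) = real p * real q * c / real r" using eq unfolding c_def d_def .
  have cpos: "c > 0" unfolding c_def using c2 by simp
  have "d * F v u = (c * (d * F v u)) / c" using cpos by simp
  also have "\<dots> = (real p * real q * c / real r) / c" using eq2 by simp
  also have "\<dots> = real p * real q / real r" using cpos by simp
  finally have "d * F v u = real p * real q / real r" .
  then have "F v u = real p * real q / (real r * d)" using pos1(2,3) unfolding d_def[symmetric]
    by (simp add: field_simps)
  then show ?thesis unfolding d_def .
qed

lemma F_zero: assumes X: "X \<in> Parts" and v: "v \<in> X" and u: "u \<notin> X" shows "F v u = 0"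
proof -
  have "cnt P v u = 0" if P: "P \<in> RP" for P
  proof -
    have "{T\<in>RT P. v \<in> T \<and> u \<notin> T \<and> u \<in> blk P v} = {}" using blk_parts[OF P X v] u by auto
    then show ?thesis unfolding cnt_def by (metis card.empty)
  qed
  then show ?thesis unfolding F_def by simp
qed

lemma F_nonneg: "F v u \<ge> 0" unfolding F_def by (intro sum_nonneg) auto

lemma F_le: assumes X: "X \<in> Parts" and v: "v \<in> X" and u: "u \<in> nbhd E v"
  shows "F v u \<le> real p * real q / (real r * real (card X - 1))"
proof (cases "u \<in> X")
  case True
  have "v \<noteq> u" using u nbhd_irr by auto
  then show ?thesis using F_val[OF X v True] by simp
next
  case False
  then show ?thesis using F_zero[OF X v False] by simp
qed

lemma Cv_split: assumes P: "P \<in> RP" shows "Cv P v = (\<Sum>u\<in>nbhd E v. real (cnt P v u))"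
proof -
  have "Cv P v = (\<Sum>T\<in>RT P. \<Sum>u\<in>nbhd E v. if v \<in> T \<and> u \<notin> T \<and> u \<in> blk P v then 1 else 0)"
    unfolding Cv_def
  proof (rule sum.cong[OF refl])
    fix T assume "T \<in> RT P"
    have "(\<Sum>u\<in>nbhd E v. if v \<in> T \<and> u \<notin> T \<and> u \<in> blk P v then 1 else 0)
        = (if v \<in> T then real (card (nbhd E v \<inter> {u. u \<notin> T \<and> u \<in> blk P v})) else 0)"
      using nbhd_fin by (simp add: sum.If_cases)
    also have "nbhd E v \<inter> {u. u \<notin> T \<and> u \<in> blk P v} = blk P v \<inter> nbhd E v - T" by auto
    finally show "(if v \<in> T then real (card (blk P v \<inter> nbhd E v - T)) else 0)
        = (\<Sum>u\<in>nbhd E v. if v \<in> T \<and> u \<notin> T \<and> u \<in> blk P v then 1 else 0)" by simp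
  qed
  also have "\<dots> = (\<Sum>u\<in>nbhd E v. \<Sum>T\<in>RT P. if v \<in> T \<and> u \<notin> T \<and> u \<in> blk P v then 1 else 0)"
    by (rule sum.swap)
  also have "\<dots> = (\<Sum>u\<in>nbhd E v. real (cnt P v u))"
    by (intro sum.cong refl) (simp add: cnt_sum_eq of_nat_sum, intro sum.cong refl, simp)
  finally show ?thesis .
qed

lemma EY: "(\<Sum>P\<in>RP. Y P / real (card RP))
   = Kmax / (real p * real q * real n) * (\<Sum>v\<in>V. (\<Sum>u\<in>nbhd E v. F v u) / real (deg E v))"
proof -
  define c0 where "c0 = Kmax / (real p * real q * real n)"
  have t: "Y P / real (card RP) = (\<Sum>v\<in>V. \<Sum>u\<in>nbhd E v. c0 * (real (cnt P v u) / (real (card RP) * real (card (RT P)))) / real (deg E v))"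
    if P: "P \<in> RP" for P
  proof -
    have "Y P / real (card RP) = (\<Sum>v\<in>V. c0 / real (card (RT P)) * ((\<Sum>u\<in>nbhd E v. real (cnt P v u)) / real (deg E v)) / real (card RP))"
      unfolding Y_def Cv_split[OF P] c0_def by (simp add: sum_distrib_left sum_divide_distrib)
    also have "\<dots> = (\<Sum>v\<in>V. \<Sum>u\<in>nbhd E v. c0 * (real (cnt P v u) / (real (card RP) * real (card (RT P)))) / real (deg E v))"
    proof (rule sum.cong[OF refl])
      fix v
      have "(\<Sum>u\<in>nbhd E v. c0 * (real (cnt P v u) / (real (card RP) * real (card (RT P)))) / real (deg E v))
          = (\<Sum>u\<in>nbhd E v. (c0 / (real (card RP) * real (card (RT P))) / real (deg E v)) * real (cnt P v u))"
        by (intro sum.cong refl) (simp add: field_simps)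
      also have "\<dots> = (c0 / (real (card RP) * real (card (RT P))) / real (deg E v)) * (\<Sum>u\<in>nbhd E v. real (cnt P v u))"
        by (simp add: sum_distrib_left)
      also have "\<dots> = c0 / real (card (RT P)) * ((\<Sum>u\<in>nbhd E v. real (cnt P v u)) / real (deg E v)) / real (card RP)"
        by (simp add: field_simps)
      finally show "c0 / real (card (RT P)) * ((\<Sum>u\<in>nbhd E v. real (cnt P v u)) / real (deg E v)) / real (card RP)
          = (\<Sum>u\<in>nbhd E v. c0 * (real (cnt P v u) / (real (card RP) * real (card (RT P)))) / real (deg E v))" by simp
    qed
    finally show ?thesis .
  qed
  have "(\<Sum>P\<in>RP. Y P / real (card RP))
      = (\<Sum>P\<in>RP. \<Sum>v\<in>V. \<Sum>u\<in>nbhd E v. c0 * (real (cnt P v u) / (real (card RP) * real (card (RT P)))) / real (deg E v))"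
    using t by (rule sum.cong[OF refl])
  also have "\<dots> = (\<Sum>v\<in>V. \<Sum>P\<in>RP. \<Sum>u\<in>nbhd E v. c0 * (real (cnt P v u) / (real (card RP) * real (card (RT P)))) / real (deg E v))"
    by (rule sum.swap)
  also have "\<dots> = (\<Sum>v\<in>V. \<Sum>u\<in>nbhd E v. \<Sum>P\<in>RP. c0 * (real (cnt P v u) / (real (card RP) * real (card (RT P)))) / real (deg E v))"
    by (rule sum.cong[OF refl], rule sum.swap)
  also have "\<dots> = (\<Sum>v\<in>V. \<Sum>u\<in>nbhd E v. c0 * F v u / real (deg E v))"
    unfolding F_def by (simp add: sum_distrib_left sum_divide_distrib)
  also have "\<dots> = c0 * (\<Sum>v\<in>V. (\<Sum>u\<in>nbhd E v. F v u) / real (deg E v))"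
    by (simp add: sum_distrib_left sum_divide_distrib)
  finally show ?thesis unfolding c0_def .
qed

lemma SB: "(\<Sum>v\<in>V. (\<Sum>u\<in>nbhd E v. F v u) / real (deg E v)) \<le> 2 * real p * real q * real (card Parts) / real r"
proof -
  have "(\<Sum>v\<in>V. (\<Sum>u\<in>nbhd E v. F v u) / real (deg E v))
      = (\<Sum>X\<in>Parts. \<Sum>v\<in>X. (\<Sum>u\<in>nbhd E v. F v u) / real (deg E v))"
    by (rule sum_over_partition[OF parts finV])
  also have "\<dots> \<le> (\<Sum>X\<in>Parts. 2 * real p * real q / real r)"
  proof (rule sum_mono)
    fix X assume X: "X \<in> Parts"
    define B where "B = real p * real q / (real r * real (card X - 1))"
    have "(\<Sum>v\<in>X. (\<Sum>u\<in>nbhd E v. F v u) / real (deg E v)) \<le> (\<Sum>v\<in>X. B)"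
    proof (rule sum_mono)
      fix v assume v: "v \<in> X"
      have vV: "v \<in> V" using parts_sub[OF X] v by auto
      have "(\<Sum>u\<in>nbhd E v. F v u) \<le> (\<Sum>u\<in>nbhd E v. B)"
        using F_le[OF X v] unfolding B_def by (rule sum_mono)
      also have "\<dots> = real (deg E v) * B" by (simp add: deg_def)
      finally have "(\<Sum>u\<in>nbhd E v. F v u) \<le> real (deg E v) * B" .
      then show "(\<Sum>u\<in>nbhd E v. F v u) / real (deg E v) \<le> B"
        using deg_pos[OF vV] by (simp add: divide_le_eq mult.commute)
    qed
    also have "\<dots> = real (card X) * B" by simp
    also have "\<dots> \<le> 2 * real p * real q / real r"
    proof -
      have c2: "card X \<ge> 2" using card_parts2[OF X] .
      define d where "d = real (card X - 1)"
      have cd: "real (card X) = d + 1" unfolding d_def using c2 by (simp add: of_nat_diff)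
      have d1: "d \<ge> 1" unfolding d_def using c2 by simp
      have rpos: "real r > 0" using r2 by simp
      have pq: "real p * real q \<ge> 0" by simp
      have "real (card X) * B = (d + 1) / d * (real p * real q / real r)"
        unfolding B_def cd d_def[symmetric] by (simp add: field_simps)
      also have "\<dots> \<le> 2 * (real p * real q / real r)"
        using d1 rpos pq by (intro mult_right_mono) (auto simp: field_simps)
      finally show ?thesis by simp
    qed
    finally show "(\<Sum>v\<in>X. (\<Sum>u\<in>nbhd E v. F v u) / real (deg E v)) \<le> 2 * real p * real q / real r" .
  qed
  also have "\<dots> = 2 * real p * real q * real (card Parts) / real r" by simp
  finally show ?thesis .
qed

lemma main:
  "measure_pmf.expectation (pmf_of_set RP)
     (\<lambda>P. (measure_pmf.expectation (pmf_of_set (RT P)) (\<lambda>T. xi V E f p q n T))\<^sup>2)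
   \<le> 2 * Kmax\<^sup>2 * real (card Parts) / (real n * real r * real D)"
proof -
  let ?e = "\<lambda>P. (measure_pmf.expectation (pmf_of_set (RT P)) (\<lambda>T. xi V E f p q n T))\<^sup>2"
  have pq: "real p * real q * real n > 0" using p_pos q_pos n_pos by simp
  have Dp: "real D > 0" using D_pos by simp
  have "measure_pmf.expectation (pmf_of_set RP) ?e = (\<Sum>P\<in>RP. ?e P) / real (card RP)"
    using integral_pmf_of_set[OF RP_ne RP_finite] by simp
  also have "\<dots> = (\<Sum>P\<in>RP. ?e P / real (card RP))" by (simp add: sum_divide_distrib)
  also have "\<dots> \<le> (\<Sum>P\<in>RP. Kmax / D * Y P / real (card RP))"
    using sq_bound RP_card_pos by (intro sum_mono divide_right_mono) auto
  also have "\<dots> = Kmax / D * (\<Sum>P\<in>RP. Y P / real (card RP))"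
    by (simp add: sum_distrib_left)
  also have "\<dots> = Kmax / D * (Kmax / (real p * real q * real n) * (\<Sum>v\<in>V. (\<Sum>u\<in>nbhd E v. F v u) / real (deg E v)))"
    unfolding EY ..
  also have "\<dots> \<le> Kmax / D * (Kmax / (real p * real q * real n) * (2 * real p * real q * real (card Parts) / real r))"
    using SB Kmax_pos Dp pq by (intro mult_left_mono) auto
  also have "\<dots> = 2 * Kmax\<^sup>2 * real (card Parts) / (real n * real r * real D)"
    using pq p_pos q_pos by (simp add: field_simps power2_eq_square)
  finally show ?thesis .
qed

end

theorem mainTheorem17:
  fixes V :: "'a set" and E :: "'a \<Rightarrow> 'a \<Rightarrow> bool"
    and f :: "'a \<Rightarrow> 'a set \<Rightarrow> real" and K :: "'a \<Rightarrow> real"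
    and n p q r :: nat and Parts :: "'a set set"
  assumes "n > 0" "p > 0" "q > 0" "r = p + q"
    and "simple_graph V E" "card V = r * n"
    and "\<forall>v\<in>V. nbhd E v \<noteq> {}"
    and "\<forall>v\<in>V. f v {} = 0"
    and "\<forall>v\<in>V. lipschitz_fv E (f v) (K v) v"
    and "partition_on V Parts" "\<forall>X\<in>Parts. r dvd card X"
  shows "measure_pmf.expectation (pmf_of_set (restricted_partitions V r Parts))
           (\<lambda>P. (measure_pmf.expectation (pmf_of_set (restricted_T V p P))
                    (\<lambda>T. xi V E f p q n T))\<^sup>2)
         \<le> 2 * (Max (K ` V))\<^sup>2 * real (card Parts) / (real n * real r * real (min_deg V E))"
proof -
  interpret thm17 V E f K n p q r Parts
    by unfold_locales (use assms in auto)
  show ?thesis using main .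
qed

end
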